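(* Consider the semi-discrete flux globalization based low-dissipation path-conservative central-upwind (LD PCCU) scheme described in the context, and assume that all quantities appearing in it are well defined (all densities $\rho^\pm_{j+1/2}>0$, all $\Gamma^\pm_{j+1/2}>0$, the square roots defining $c^\pm_{j+1/2}$ are real, $a^+_{j+1/2}-a^-_{j+1/2}>0$, and $\rho^*_{j+1/2}\neq0$, $\Gamma^*_{j+1/2}\neq0$ for all relevant $j$). 1. If at some time $t$ the cell averages satisfy $\overline\Gamma_j\equiv\widehat\Gamma$ and $\overline\Pi_j\equiv\widehat\Pi$ for all $j$ (including ghost cells), where $\widehat\Gamma,\widehat\Pi$ are constants, then $$\frac{d}{dt}\overline\Gamma_j=\frac{d}{dt}\overline\Pi_j=0\quad\text{for all } j=1,\dots,N,$$ i.e., the fourth and fifth components of the right-hand side of the semi-discrete scheme vanish. 2. Suppose that at time level $t^n$ the cell-centered velocities and pressures satisfy $u^n_j\equiv\widehat u$ and $p^n_j\equiv\widehat p$ for all $j$ (including ghost cells), with constants $\widehat u,\widehat p$, and let the cell averages at $t^{n+1}=t^n+\Delta t$ be computed by one forward Euler step $$\overline{\mathbf U}^{\,n+1}_j=\overline{\mathbf U}^{\,n}_j-\frac{\Delta t}{\Delta x}\Big(\boldsymbol{\mathcal K}_{j+1/2}-\boldsymbol{\mathcal K}_{j-1/2}\Big),\qquad j=1,\dots,N,$$ with the numerical fluxes evaluated from the data at $t^n$. Assume $\overline\rho^{\,n+1}_j\neq0$ and $\overline\Gamma^{\,n+1}_j\neq0$. Then $$u^{n+1}_j:=\frac{(\overline{\rho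 u})^{n+1}_j}{\overline\rho^{\,n+1}_j}=\widehat u,\qquad p^{n+1}_j:=\frac{1}{\overline\Gamma^{\,n+1}_j}\Big[\overline E^{\,n+1}_j-\frac{\big((\overline{\rho u})^{n+1}_j\big)^2}{2\overline\rho^{\,n+1}_j}-\overline\Pi^{\,n+1}_j\Big]=\widehat p\qquad\text{for all } j=1,\dots,N.$$
   Context: Model: the 1-D $\gamma$-based multifluid system $\rho_t+(\rho u)_x=0$, $(\rho u)_t+(\rho u^2+p)_x=0$, $E_t+[u(E+p)]_x=0$, $\Gamma_t+(u\Gamma)_x=\Gamma u_x$, $\Pi_t+(u\Pi)_x=\Pi u_x$, where $\Gamma=1/(\gamma-1)$, $\Pi=\gamma\pi_\infty/(\gamma-1)$ and the EOS is $p=(E-\tfrac12\rho u^2-\Pi)/\Gamma$. Write $\mathbf U=(\rho,\rho u,E,\Gamma,\Pi)^\top$, $\mathbf F(\mathbf U)=(\rho u,\rho u^2+p,u(E+p),u\Gamma,u\Pi)^\top$. Let ${\rm minmod}(c_1,c_2)$ equal $\min(c_1,c_2)$ if both are positive, $\max(c_1,c_2)$ if both are negative, and $0$ otherwise. Mesh and data: uniform cells $C_j=[x_{j-1/2},x_{j+1/2}]$ of width $\Delta x$, $j=1,\dots,N$, together with finitely many ghost cells on each side supplying the data needed below. Cell averages $\overline{\mathbf U}_j=(\overline\rho_j,(\overline{\rho u})_j,\overline E_j,\overline\Gamma_j,\overline\Pi_j)^\top$ are given; set $u_j=(\overline{\rho u})_j/\overline\rho_j$, $p_j=\big[\overline E_j-((\overline{\rho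 u})_j)^2/(2\overline\rho_j)-\overline\Pi_j\big]/\overline\Gamma_j$, and $\mathbf V_j=(\overline\rho_j,u_j,p_j,\overline\Gamma_j,\overline\Pi_j)^\top$. Reconstruction: $\mathbf V^-_{j+1/2}=\mathbf V_j+\tfrac{\Delta x}{2}(\mathbf V_x)_j$, $\mathbf V^+_{j+1/2}=\mathbf V_{j+1}-\tfrac{\Delta x}{2}(\mathbf V_x)_{j+1}$, where the slopes $(\mathbf V_x)_j$ are computed componentwise by a limiter (e.g. generalized minmod or SBM) with the property that the slope of a component vanishes whenever that component takes the same value in all cells of the stencil. Write $\mathbf V^\pm_{j+1/2}=(\rho^\pm,u^\pm,p^\pm,\Gamma^\pm,\Pi^\pm)_{j+1/2}$, and define $E^\pm_{j+1/2}=\Gamma^\pm_{j+1/2}p^\pm_{j+1/2}+\tfrac12\rho^\pm_{j+1/2}(u^\pm_{j+1/2})^2+\Pi^\pm_{j+1/2}$, $\mathbf U^\pm_{j+1/2}=(\rho^\pm,\rho^\pm u^\pm,E^\pm,\Gamma^\pm,\Pi^\pm)^\top_{j+1/2}$, $\mathbf F^\pm_{j+1/2}=\mathbf F(\mathbf U^\pm_{j+1/2})$. Global fluxes: let $\mathbf B_j=\big(0,0,0,\tfrac{\Gamma^-_{j+1/2}+\Gamma^+_{j-1/2}}{2}(u^-_{j+1/2}-u^+_{j-1/2}),\tfrac{\Pi^-_{j+1/2}+\Pi^+_{j-1/2}}{2}(u^-_{j+1/2}-u^+_{j-1/2})\big)^\top$ and $\mathbf B_{\Psi,j+1/2}=\big(0,0,0,\tfrac{\Gamma^+_{j+1/2}+\Gamma^-_{j+1/2}}{2}(u^+_{j+1/2}-u^-_{j+1/2}),\tfrac{\Pi^+_{j+1/2}+\Pi^-_{j+1/2}}{2}(u^+_{j+1/2}-u^-_{j+1/2})\big)^\top$.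 Set $\mathbf R^-_{1/2}=\mathbf 0$, $\mathbf R^+_{1/2}=\mathbf B_{\Psi,1/2}$, and recursively $\mathbf R^-_{j+1/2}=\mathbf R^+_{j-1/2}+\mathbf B_j$, $\mathbf R^+_{j+1/2}=\mathbf R^-_{j+1/2}+\mathbf B_{\Psi,j+1/2}$ for $j=1,\dots,N$; then $\mathbf K^\pm_{j+1/2}=\mathbf F^\pm_{j+1/2}-\mathbf R^\pm_{j+1/2}$. Local speeds: $c=\sqrt{[(1+\Gamma)p+\Pi]/(\Gamma\rho)}$ evaluated at the $\pm$ point values, $a^+_{j+1/2}=\max\{u^-_{j+1/2}+c^-_{j+1/2},u^+_{j+1/2}+c^+_{j+1/2},0\}$, $a^-_{j+1/2}=\min\{u^-_{j+1/2}-c^-_{j+1/2},u^+_{j+1/2}-c^+_{j+1/2},0\}$. Anti-diffusion: $\mathbf U^*_{j+1/2}=\dfrac{a^+_{j+1/2}\mathbf U^+_{j+1/2}-a^-_{j+1/2}\mathbf U^-_{j+1/2}-(\mathbf K^+_{j+1/2}-\mathbf K^-_{j+1/2})}{a^+_{j+1/2}-a^-_{j+1/2}}$ with components $(\rho^*,(\rho u)^*,E^*,\Gamma^*,\Pi^* )_{j+1/2}$, $u^*_{j+1/2}=(\rho u)^*_{j+1/2}/\rho^*_{j+1/2}$; for $w\in\{\rho,\Gamma,\Pi\}$, $q^w_{j+1/2}={\rm minmod}\big(-a^-_{j+1/2}(w^*_{j+1/2}-w^-_{j+1/2}),\,a^+_{j+1/2}(w^+_{j+1/2}-w^*_{j+1/2})\big)$;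 and $\mathbf q_{j+1/2}=q^\rho_{j+1/2}\big(1,u^*,\tfrac12(u^* )^2,0,0\big)^\top_{j+1/2}+q^\Gamma_{j+1/2}\big(0,0,\tfrac{1}{\Gamma^*}\big[E^*-\tfrac{((\rho u)^* )^2}{2\rho^*}-\Pi^*\big],1,0\big)^\top_{j+1/2}+q^\Pi_{j+1/2}(0,0,1,0,1)^\top$. Numerical flux: $\boldsymbol{\mathcal K}_{j+1/2}=\dfrac{a^+_{j+1/2}\mathbf K^-_{j+1/2}-a^-_{j+1/2}\mathbf K^+_{j+1/2}}{a^+_{j+1/2}-a^-_{j+1/2}}+\dfrac{a^+_{j+1/2}a^-_{j+1/2}}{a^+_{j+1/2}-a^-_{j+1/2}}(\mathbf U^+_{j+1/2}-\mathbf U^-_{j+1/2})+\mathbf q_{j+1/2}$. Semi-discrete LD PCCU scheme: $\dfrac{d}{dt}\overline{\mathbf U}_j=-\dfrac{\boldsymbol{\mathcal K}_{j+1/2}-\boldsymbol{\mathcal K}_{j-1/2}}{\Delta x}$, $j=1,\dots,N$. *)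

theory Defs
  imports Complex_Main
begin

text \<open>Cells are indexed by integers (cells 1..N are interior,
all other integers are ghost cells). Interface x_{j+1/2} is indexed by j.
Vectors in R^5 are functions nat => real with components 0..4
(0 = rho, 1 = rho u, 2 = E, 3 = Gamma, 4 = Pi).\<close>

record cdata =
  rh :: "int \<Rightarrow> real"
  mo :: "int \<Rightarrow> real"
  en :: "int \<Rightarrow> real"
  ga :: "int \<Rightarrow> real"
  pq :: "int \<Rightarrow> real"

type_synonym limiter = "(int \<Rightarrow> real) \<Rightarrow> int \<Rightarrow> real"

definition vec5 :: "real \<Rightarrow> real \<Rightarrow> real \<Rightarrow> real \<Rightarrow> real \<Rightarrow> nat \<Rightarrow> real" where
  "vec5 a b c d e = (\<lambda>k. if k = 0 then a else if k = 1 then b else if k = 2 then c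
                          else if k = 3 then d else e)"

definition minmod :: "real \<Rightarrow> real \<Rightarrow> real" where
  "minmod c1 c2 = (if c1 > 0 \<and> c2 > 0 then min c1 c2
                   else if c1 < 0 \<and> c2 < 0 then max c1 c2 else 0)"

definition vel :: "cdata \<Rightarrow> int \<Rightarrow> real" where
  "vel D j = mo D j / rh D j"

definition pres :: "cdata \<Rightarrow> int \<Rightarrow> real" where
  "pres D j = (en D j - (mo D j)\<^sup>2 / (2 * rh D j) - pq D j) / ga D j"

definition Fphys :: "(nat \<Rightarrow> real) \<Rightarrow> nat \<Rightarrow> real" where
  "Fphys U = (let r = U 0; m = U 1; e = U 2; g = U 3; q = U 4; u = m / r;
                  p = (e - m\<^sup>2 / (2 * r) - q) / g
              in vec5 (r * u) (r * u\<^sup>2 + p) (u * (e + p)) (u * g) (u * q))"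

(* reconstruction: left value V^-_{j+1/2} and right value V^+_{j+1/2} of a component w *)
definition recL :: "limiter \<Rightarrow> real \<Rightarrow> (int \<Rightarrow> real) \<Rightarrow> int \<Rightarrow> real" where
  "recL sl dx w j = w j + dx / 2 * sl w j"

definition recR :: "limiter \<Rightarrow> real \<Rightarrow> (int \<Rightarrow> real) \<Rightarrow> int \<Rightarrow> real" where
  "recR sl dx w j = w (j + 1) - dx / 2 * sl w (j + 1)"

definition rhoM where "rhoM sl dx D = recL sl dx (rh D)"
definition rhoP where "rhoP sl dx D = recR sl dx (rh D)"
definition uM where "uM sl dx D = recL sl dx (vel D)"
definition uP where "uP sl dx D = recR sl dx (vel D)"
definition pM where "pM sl dx D = recL sl dx (pres D)"
definition pP where "pP sl dx D = recR sl dx (pres D)"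
definition GM where "GM sl dx D = recL sl dx (ga D)"
definition GP where "GP sl dx D = recR sl dx (ga D)"
definition PM where "PM sl dx D = recL sl dx (pq D)"
definition PP where "PP sl dx D = recR sl dx (pq D)"

definition EM :: "limiter \<Rightarrow> real \<Rightarrow> cdata \<Rightarrow> int \<Rightarrow> real" where
  "EM sl dx D j = GM sl dx D j * pM sl dx D j + rhoM sl dx D j * (uM sl dx D j)\<^sup>2 / 2 + PM sl dx D j"
definition EP :: "limiter \<Rightarrow> real \<Rightarrow> cdata \<Rightarrow> int \<Rightarrow> real" where
  "EP sl dx D j = GP sl dx D j * pP sl dx D j + rhoP sl dx D j * (uP sl dx D j)\<^sup>2 / 2 + PP sl dx D j"

definition UM :: "limiter \<Rightarrow> real \<Rightarrow> cdata \<Rightarrow> int \<Rightarrow> nat \<Rightarrow> real" where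
  "UM sl dx D j = vec5 (rhoM sl dx D j) (rhoM sl dx D j * uM sl dx D j) (EM sl dx D j)
                       (GM sl dx D j) (PM sl dx D j)"
definition UP :: "limiter \<Rightarrow> real \<Rightarrow> cdata \<Rightarrow> int \<Rightarrow> nat \<Rightarrow> real" where
  "UP sl dx D j = vec5 (rhoP sl dx D j) (rhoP sl dx D j * uP sl dx D j) (EP sl dx D j)
                       (GP sl dx D j) (PP sl dx D j)"

(* B_j (cell j) and B_{Psi,j+1/2} (interface j) *)
definition Bc :: "limiter \<Rightarrow> real \<Rightarrow> cdata \<Rightarrow> int \<Rightarrow> nat \<Rightarrow> real" where
  "Bc sl dx D j = vec5 0 0 0
     ((GM sl dx D j + GP sl dx D (j - 1)) / 2 * (uM sl dx D j - uP sl dx D (j - 1)))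
     ((PM sl dx D j + PP sl dx D (j - 1)) / 2 * (uM sl dx D j - uP sl dx D (j - 1)))"
definition BPsi :: "limiter \<Rightarrow> real \<Rightarrow> cdata \<Rightarrow> int \<Rightarrow> nat \<Rightarrow> real" where
  "BPsi sl dx D j = vec5 0 0 0
     ((GP sl dx D j + GM sl dx D j) / 2 * (uP sl dx D j - uM sl dx D j))
     ((PP sl dx D j + PM sl dx D j) / 2 * (uP sl dx D j - uM sl dx D j))"

(* global fluxes: Rm n = R^-_{n+1/2}, Rp n = R^+_{n+1/2} *)
fun Rm :: "limiter \<Rightarrow> real \<Rightarrow> cdata \<Rightarrow> nat \<Rightarrow> nat \<Rightarrow> real" where
  "Rm sl dx D 0 = (\<lambda>k. 0)"
| "Rm sl dx D (Suc n) = (\<lambda>k. Rm sl dx D n k + BPsi sl dx D (int n) k + Bc sl dx D (int n + 1) k)"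

definition Rp :: "limiter \<Rightarrow> real \<Rightarrow> cdata \<Rightarrow> nat \<Rightarrow> nat \<Rightarrow> real" where
  "Rp sl dx D n = (\<lambda>k. Rm sl dx D n k + BPsi sl dx D (int n) k)"

definition Km :: "limiter \<Rightarrow> real \<Rightarrow> cdata \<Rightarrow> nat \<Rightarrow> nat \<Rightarrow> real" where
  "Km sl dx D n = (\<lambda>k. Fphys (UM sl dx D (int n)) k - Rm sl dx D n k)"
definition Kp :: "limiter \<Rightarrow> real \<Rightarrow> cdata \<Rightarrow> nat \<Rightarrow> nat \<Rightarrow> real" where
  "Kp sl dx D n = (\<lambda>k. Fphys (UP sl dx D (int n)) k - Rp sl dx D n k)"

definition snd_radicand :: "real \<Rightarrow> real \<Rightarrow> real \<Rightarrow> real \<Rightarrow> real" where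
  "snd_radicand r p g q = ((1 + g) * p + q) / (g * r)"

definition cM where "cM sl dx D j = sqrt (snd_radicand (rhoM sl dx D j) (pM sl dx D j) (GM sl dx D j) (PM sl dx D j))"
definition cP where "cP sl dx D j = sqrt (snd_radicand (rhoP sl dx D j) (pP sl dx D j) (GP sl dx D j) (PP sl dx D j))"

definition aPl :: "limiter \<Rightarrow> real \<Rightarrow> cdata \<Rightarrow> int \<Rightarrow> real" where
  "aPl sl dx D j = max (max (uM sl dx D j + cM sl dx D j) (uP sl dx D j + cP sl dx D j)) 0"
definition aMi :: "limiter \<Rightarrow> real \<Rightarrow> cdata \<Rightarrow> int \<Rightarrow> real" where
  "aMi sl dx D j = min (min (uM sl dx D j - cM sl dx D j) (uP sl dx D j - cP sl dx D j)) 0"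

definition Ustar :: "limiter \<Rightarrow> real \<Rightarrow> cdata \<Rightarrow> nat \<Rightarrow> nat \<Rightarrow> real" where
  "Ustar sl dx D n = (\<lambda>k.
     (aPl sl dx D (int n) * UP sl dx D (int n) k - aMi sl dx D (int n) * UM sl dx D (int n) k
      - (Kp sl dx D n k - Km sl dx D n k)) / (aPl sl dx D (int n) - aMi sl dx D (int n)))"

definition qw :: "limiter \<Rightarrow> real \<Rightarrow> cdata \<Rightarrow> nat \<Rightarrow> nat \<Rightarrow> real" where
  "qw sl dx D n i = minmod (- aMi sl dx D (int n) * (Ustar sl dx D n i - UM sl dx D (int n) i))
                           (aPl sl dx D (int n) * (UP sl dx D (int n) i - Ustar sl dx D n i))"

definition qvec :: "limiter \<Rightarrow> real \<Rightarrow> cdata \<Rightarrow> nat \<Rightarrow> nat \<Rightarrow> real" where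
  "qvec sl dx D n = (let S = Ustar sl dx D n; us = S 1 / S 0;
       eps = (S 2 - (S 1)\<^sup>2 / (2 * S 0) - S 4) / S 3;
       q1 = qw sl dx D n 0; q2 = qw sl dx D n 3; q3 = qw sl dx D n 4
     in (\<lambda>k. q1 * vec5 1 us (us\<^sup>2 / 2) 0 0 k + q2 * vec5 0 0 eps 1 0 k + q3 * vec5 0 0 1 0 1 k))"

definition Kflux :: "limiter \<Rightarrow> real \<Rightarrow> cdata \<Rightarrow> nat \<Rightarrow> nat \<Rightarrow> real" where
  "Kflux sl dx D n = (let ap = aPl sl dx D (int n); am = aMi sl dx D (int n) in
     (\<lambda>k. (ap * Km sl dx D n k - am * Kp sl dx D n k) / (ap - am)
          + ap * am / (ap - am) * (UP sl dx D (int n) k - UM sl dx D (int n) k)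
          + qvec sl dx D n k))"

definition rhs :: "limiter \<Rightarrow> real \<Rightarrow> cdata \<Rightarrow> nat \<Rightarrow> nat \<Rightarrow> real" where
  "rhs sl dx D j = (\<lambda>k. - (Kflux sl dx D j k - Kflux sl dx D (j - 1) k) / dx)"

definition well_defined :: "limiter \<Rightarrow> real \<Rightarrow> cdata \<Rightarrow> nat \<Rightarrow> bool" where
  "well_defined sl dx D N \<longleftrightarrow> (\<forall>n\<le>N. let j = int n in
      rhoM sl dx D j > 0 \<and> rhoP sl dx D j > 0 \<and> GM sl dx D j > 0 \<and> GP sl dx D j > 0
    \<and> snd_radicand (rhoM sl dx D j) (pM sl dx D j) (GM sl dx D j) (PM sl dx D j) \<ge> 0
    \<and> snd_radicand (rhoP sl dx D j) (pP sl dx D j) (GP sl dx D j) (PP sl dx D j) \<ge> 0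
    \<and> aPl sl dx D j - aMi sl dx D j > 0
    \<and> Ustar sl dx D n 0 \<noteq> 0 \<and> Ustar sl dx D n 3 \<noteq> 0)"

definition euler :: "limiter \<Rightarrow> real \<Rightarrow> cdata \<Rightarrow> real \<Rightarrow> nat \<Rightarrow> nat \<Rightarrow> real" where
  "euler sl dx D dt j = (\<lambda>k. vec5 (rh D (int j)) (mo D (int j)) (en D (int j)) (ga D (int j)) (pq D (int j)) k
                     + dt * rhs sl dx D j k)"

end

theory Submission
  imports Defs
begin


lemma vec5_simps[simp]: "vec5 a b c d e 0 = a" "vec5 a b c d e 1 = b" "vec5 a b c d e 2 = c"
  "vec5 a b c d e 3 = d" "vec5 a b c d e 4 = e" "vec5 a b c d e (Suc 0) = b"
  by (simp_all add: vec5_def)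

lemma minmod00[simp]: "minmod 0 0 = 0" by (simp add: minmod_def)

lemma Fphys34: "Fphys U 3 = U 1 / U 0 * U 3" "Fphys U 4 = U 1 / U 0 * U 4"
  by (simp_all add: Fphys_def Let_def)

context
  fixes sl :: limiter and dx :: real and N :: nat and D :: cdata and Gh Ph :: real
  assumes lim: "\<And>w c j. (\<forall>i. w i = c) \<Longrightarrow> sl w j = 0"
    and wd: "well_defined sl dx D N"
    and G: "\<forall>j. ga D j = Gh" and P: "\<forall>j. pq D j = Ph"
begin

lemma GMc[simp]: "GM sl dx D j = Gh" "GP sl dx D j = Gh"
  using lim[of "ga D" Gh] G by (auto simp: GM_def GP_def recL_def recR_def)
lemma PMc[simp]: "PM sl dx D j = Ph" "PP sl dx D j = Ph"
  using lim[of "pq D" Ph] P by (auto simp: PM_def PP_def recL_def recR_def)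

lemma Rm3: "Rm sl dx D n 3 = Gh * (uM sl dx D (int n) - uM sl dx D 0)"
  by (induction n) (auto simp: Bc_def BPsi_def algebra_simps)
lemma Rm4: "Rm sl dx D n 4 = Ph * (uM sl dx D (int n) - uM sl dx D 0)"
  by (induction n) (auto simp: Bc_def BPsi_def algebra_simps)

lemma wdn: "n \<le> N \<Longrightarrow> rhoM sl dx D (int n) > 0 \<and> rhoP sl dx D (int n) > 0
   \<and> aPl sl dx D (int n) - aMi sl dx D (int n) > 0"
  using wd by (auto simp: well_defined_def Let_def)

lemma Kflux3: assumes "n \<le> N" shows "Kflux sl dx D n 3 = Gh * uM sl dx D 0"
proof -
  note w = wdn[OF assms]
  have km: "Km sl dx D n 3 = Gh * uM sl dx D 0"
    using w by (simp add: Km_def Fphys34 UM_def Rm3 algebra_simps)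
  have kp: "Kp sl dx D n 3 = Gh * uM sl dx D 0"
    using w by (simp add: Kp_def Rp_def Fphys34 UP_def Rm3 BPsi_def algebra_simps)
  define ap where "ap = aPl sl dx D (int n)"
  define am where "am = aMi sl dx D (int n)"
  have d: "ap - am > 0" using w by (simp add: ap_def am_def)
  have us: "Ustar sl dx D n 3 = Gh"
    using d unfolding Ustar_def ap_def[symmetric] am_def[symmetric]
    by (simp add: km kp UM_def UP_def field_simps)
  have q: "qvec sl dx D n 3 = 0"
    by (simp add: qvec_def Let_def qw_def us UM_def UP_def)
  show ?thesis
    using d unfolding Kflux_def Let_def ap_def[symmetric] am_def[symmetric]
    by (simp add: km kp q UM_def UP_def field_simps)
qed

lemma Kflux4: assumes "n \<le> N" shows "Kflux sl dx D n 4 = Ph * uM sl dx D 0"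
proof -
  note w = wdn[OF assms]
  have km: "Km sl dx D n 4 = Ph * uM sl dx D 0"
    using w by (simp add: Km_def Fphys34 UM_def Rm4 algebra_simps)
  have kp: "Kp sl dx D n 4 = Ph * uM sl dx D 0"
    using w by (simp add: Kp_def Rp_def Fphys34 UP_def Rm4 BPsi_def algebra_simps)
  define ap where "ap = aPl sl dx D (int n)"
  define am where "am = aMi sl dx D (int n)"
  have d: "ap - am > 0" using w by (simp add: ap_def am_def)
  have us: "Ustar sl dx D n 4 = Ph"
    using d unfolding Ustar_def ap_def[symmetric] am_def[symmetric]
    by (simp add: km kp UM_def UP_def field_simps)
  have q: "qvec sl dx D n 4 = 0"
    by (simp add: qvec_def Let_def qw_def us UM_def UP_def)
  show ?thesis
    using d unfolding Kflux_def Let_def ap_def[symmetric] am_def[symmetric]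
    by (simp add: km kp q UM_def UP_def field_simps)
qed

lemma part1: "\<forall>j\<in>{1..N}. rhs sl dx D j 3 = 0 \<and> rhs sl dx D j 4 = 0"
  by (auto simp: rhs_def Kflux3 Kflux4)

end



lemma Fphys_all: "Fphys U = vec5 (U 0 * (U 1 / U 0)) (U 0 * (U 1 / U 0)\<^sup>2 + (U 2 - (U 1)\<^sup>2 / (2 * U 0) - U 4) / U 3)
   (U 1 / U 0 * (U 2 + (U 2 - (U 1)\<^sup>2 / (2 * U 0) - U 4) / U 3)) (U 1 / U 0 * U 3) (U 1 / U 0 * U 4)"
  by (simp add: Fphys_def Let_def)

context
  fixes sl :: limiter and dx :: real and N :: nat and D :: cdata and uh ph :: real
  assumes lim: "\<And>w c j. (\<forall>i. w i = c) \<Longrightarrow> sl w j = 0"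
    and wd: "well_defined sl dx D N"
    and V: "\<forall>j. vel D j = uh" and Pr: "\<forall>j. pres D j = ph"
begin

lemma uMc[simp]: "uM sl dx D j = uh" "uP sl dx D j = uh"
  using lim[of "vel D" uh] V by (auto simp: uM_def uP_def recL_def recR_def)
lemma pMc[simp]: "pM sl dx D j = ph" "pP sl dx D j = ph"
  using lim[of "pres D" ph] Pr by (auto simp: pM_def pP_def recL_def recR_def)

lemma Rm0: "Rm sl dx D n = (\<lambda>k. 0)"
proof (induction n)
  case (Suc n)
  have "BPsi sl dx D j k = 0" "Bc sl dx D j k = 0" for j k
    by (auto simp: BPsi_def Bc_def vec5_def)
  then show ?case using Suc by simp
qed simp

lemma Rp0: "Rp sl dx D n = (\<lambda>k. 0)"
  by (auto simp: Rp_def Rm0 BPsi_def vec5_def)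

lemma wdn2: "n \<le> N \<Longrightarrow> rhoM sl dx D (int n) > 0 \<and> rhoP sl dx D (int n) > 0
   \<and> GM sl dx D (int n) > 0 \<and> GP sl dx D (int n) > 0
   \<and> aPl sl dx D (int n) - aMi sl dx D (int n) > 0
   \<and> Ustar sl dx D n 0 \<noteq> 0 \<and> Ustar sl dx D n 3 \<noteq> 0"
  using wd by (auto simp: well_defined_def Let_def)

lemma Kflux_rel: assumes "n \<le> N"
  shows "Kflux sl dx D n 1 = uh * Kflux sl dx D n 0 + ph"
    "Kflux sl dx D n 2 = ph * Kflux sl dx D n 3 + uh\<^sup>2 / 2 * Kflux sl dx D n 0 + Kflux sl dx D n 4 + uh * ph"
proof -
  note w = wdn2[OF assms]
  define rM where "rM = rhoM sl dx D (int n)"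
  define rP where "rP = rhoP sl dx D (int n)"
  define gM where "gM = GM sl dx D (int n)"
  define gP where "gP = GP sl dx D (int n)"
  define qM where "qM = PM sl dx D (int n)"
  define qP where "qP = PP sl dx D (int n)"
  define ap where "ap = aPl sl dx D (int n)"
  define am where "am = aMi sl dx D (int n)"
  have pos: "rM > 0" "rP > 0" "gM > 0" "gP > 0" "ap - am > 0"
    using w by (simp_all add: rM_def rP_def gM_def gP_def ap_def am_def)
  have UMe: "UM sl dx D (int n) = vec5 rM (rM * uh) (gM * ph + rM * uh\<^sup>2 / 2 + qM) gM qM"
    by (simp add: UM_def EM_def rM_def gM_def qM_def)
  have UPe: "UP sl dx D (int n) = vec5 rP (rP * uh) (gP * ph + rP * uh\<^sup>2 / 2 + qP) gP qP"
    by (simp add: UP_def EP_def rP_def gP_def qP_def)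
  have FM: "Fphys (vec5 rM (rM * uh) (gM * ph + rM * uh\<^sup>2 / 2 + qM) gM qM)
     = vec5 (rM * uh) (rM * uh\<^sup>2 + ph) (uh * (gM * ph + rM * uh\<^sup>2 / 2 + qM + ph)) (uh * gM) (uh * qM)"
    using pos by (simp add: Fphys_all power2_eq_square field_simps)
  have FP: "Fphys (vec5 rP (rP * uh) (gP * ph + rP * uh\<^sup>2 / 2 + qP) gP qP)
     = vec5 (rP * uh) (rP * uh\<^sup>2 + ph) (uh * (gP * ph + rP * uh\<^sup>2 / 2 + qP + ph)) (uh * gP) (uh * qP)"
    using pos by (simp add: Fphys_all power2_eq_square field_simps)
  have Km: "Km sl dx D n = vec5 (rM * uh) (rM * uh\<^sup>2 + ph) (uh * (gM * ph + rM * uh\<^sup>2 / 2 + qM + ph)) (uh * gM) (uh * qM)"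
    unfolding FM[symmetric] by (simp add: Km_def Rm0 UMe)
  have Kp: "Kp sl dx D n = vec5 (rP * uh) (rP * uh\<^sup>2 + ph) (uh * (gP * ph + rP * uh\<^sup>2 / 2 + qP + ph)) (uh * gP) (uh * qP)"
    unfolding FP[symmetric] by (simp add: Kp_def Rp0 UPe)
  define S where "S = Ustar sl dx D n"
  have S: "S k = (ap * UP sl dx D (int n) k - am * UM sl dx D (int n) k
      - (Kp sl dx D n k - Km sl dx D n k)) / (ap - am)" for k
    by (simp add: S_def Ustar_def ap_def am_def)
  have S0: "S 0 \<noteq> 0" "S 3 \<noteq> 0" using w by (simp_all add: S_def)
  have S1: "S 1 = uh * S 0"
    using pos by (simp add: S UMe UPe Km Kp field_simps power2_eq_square)
  define Nn where "Nn k = ap * UP sl dx D (int n) k - am * UM sl dx D (int n) k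
      - (Kp sl dx D n k - Km sl dx D n k)" for k
  have SN: "S k = Nn k / (ap - am)" for k by (simp add: S Nn_def)
  have N2: "Nn 2 = ph * Nn 3 + uh\<^sup>2 / 2 * Nn 0 + Nn 4"
    by (simp add: Nn_def UMe UPe Km Kp field_simps power2_eq_square)
  have S2: "S 2 = ph * S 3 + uh\<^sup>2 / 2 * S 0 + S 4"
    unfolding SN N2 by (simp add: add_divide_distrib)
  have us: "S 1 / S 0 = uh" using S0 S1 by simp
  have eps: "(S 2 - (S 1)\<^sup>2 / (2 * S 0) - S 4) / S 3 = ph"
    using S0 unfolding S2 unfolding S1 by (simp add: field_simps power2_eq_square)
  define q1 where "q1 = qw sl dx D n 0"
  define q2 where "q2 = qw sl dx D n 3"
  define q3 where "q3 = qw sl dx D n 4"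
  have qv: "qvec sl dx D n = (\<lambda>k. q1 * vec5 1 uh (uh\<^sup>2 / 2) 0 0 k + q2 * vec5 0 0 ph 1 0 k + q3 * vec5 0 0 1 0 1 k)"
    unfolding qvec_def Let_def S_def[symmetric] us eps q1_def q2_def q3_def ..
  define M where "M k = ap * Km sl dx D n k - am * Kp sl dx D n k
          + ap * am * (UP sl dx D (int n) k - UM sl dx D (int n) k)" for k
  define d where "d = ap - am"
  have dnz: "d \<noteq> 0" using pos by (simp add: d_def)
  have Kf: "Kflux sl dx D n k = M k / d + qvec sl dx D n k" for k
    by (simp add: Kflux_def Let_def ap_def am_def M_def d_def add_divide_distrib diff_divide_distrib
        ring_distribs)
  have M1: "M 1 = uh * M 0 + ph * d"
    by (simp add: M_def d_def Km Kp UMe UPe field_simps power2_eq_square)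
  have M2: "M 2 = ph * M 3 + uh\<^sup>2 / 2 * M 0 + M 4 + uh * ph * d"
    by (simp add: M_def d_def Km Kp UMe UPe field_simps power2_eq_square)
  have Q1: "qvec sl dx D n 1 = uh * qvec sl dx D n 0"
    by (simp add: qv)
  have Q2: "qvec sl dx D n 2 = ph * qvec sl dx D n 3 + uh\<^sup>2 / 2 * qvec sl dx D n 0 + qvec sl dx D n 4"
    by (simp add: qv algebra_simps)
  show "Kflux sl dx D n 1 = uh * Kflux sl dx D n 0 + ph"
    unfolding Kf M1 Q1 using dnz by (simp add: field_simps)
  show "Kflux sl dx D n 2 = ph * Kflux sl dx D n 3 + uh\<^sup>2 / 2 * Kflux sl dx D n 0 + Kflux sl dx D n 4 + uh * ph"
    unfolding Kf M2 Q2 using dnz by (simp add: field_simps)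
qed

lemma cell: assumes "j \<ge> 1" "j \<le> N"
  shows "mo D (int j) = uh * rh D (int j)"
    "en D (int j) = ph * ga D (int j) + uh\<^sup>2 / 2 * rh D (int j) + pq D (int j)"
proof -
  have a: "rhoP sl dx D (int (j - 1)) > 0" "rhoM sl dx D (int j) > 0"
    "GP sl dx D (int (j - 1)) > 0" "GM sl dx D (int j) > 0"
    using wdn2[of "j - 1"] wdn2[of j] assms by auto
  have ij: "int (j - 1) + 1 = int j" using assms by simp
  have r: "rh D (int j) > 0" using a(1,2) unfolding rhoP_def rhoM_def recL_def recR_def ij by linarith
  have g: "ga D (int j) > 0" using a(3,4) unfolding GP_def GM_def recL_def recR_def ij by linarith
  show m: "mo D (int j) = uh * rh D (int j)"
    using V r unfolding vel_def by (metis less_irrefl nonzero_eq_divide_eq mult.commute)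
  show "en D (int j) = ph * ga D (int j) + uh\<^sup>2 / 2 * rh D (int j) + pq D (int j)"
  proof -
    have "pres D (int j) = ph" using Pr by simp
    then show ?thesis using r g unfolding pres_def m by (auto simp: field_simps power2_eq_square)
  qed
qed

lemma part2: "\<forall>j\<in>{1..N}. euler sl dx D dt j 0 \<noteq> 0 \<and> euler sl dx D dt j 3 \<noteq> 0 \<longrightarrow>
               euler sl dx D dt j 1 / euler sl dx D dt j 0 = uh
             \<and> (euler sl dx D dt j 2 - (euler sl dx D dt j 1)\<^sup>2 / (2 * euler sl dx D dt j 0)
                  - euler sl dx D dt j 4) / euler sl dx D dt j 3 = ph"
proof (intro ballI impI)
  fix j assume j: "j \<in> {1..N}" and nz: "euler sl dx D dt j 0 \<noteq> 0 \<and> euler sl dx D dt j 3 \<noteq> 0"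
  let ?e = "euler sl dx D dt j"
  have k1: "Kflux sl dx D j 1 = uh * Kflux sl dx D j 0 + ph"
     "Kflux sl dx D j 2 = ph * Kflux sl dx D j 3 + uh\<^sup>2 / 2 * Kflux sl dx D j 0 + Kflux sl dx D j 4 + uh * ph"
    using Kflux_rel[of j] j by auto
  have k2: "Kflux sl dx D (j-1) 1 = uh * Kflux sl dx D (j-1) 0 + ph"
     "Kflux sl dx D (j-1) 2 = ph * Kflux sl dx D (j-1) 3 + uh\<^sup>2 / 2 * Kflux sl dx D (j-1) 0 + Kflux sl dx D (j-1) 4 + uh * ph"
    using Kflux_rel[of "j-1"] j by auto
  have c: "mo D (int j) = uh * rh D (int j)"
    "en D (int j) = ph * ga D (int j) + uh\<^sup>2 / 2 * rh D (int j) + pq D (int j)"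
    using cell j by auto
  have e1: "?e 1 = uh * ?e 0"
    unfolding euler_def rhs_def k1 k2 c by (simp add: field_simps)
  have e2: "?e 2 = ph * ?e 3 + uh\<^sup>2 / 2 * ?e 0 + ?e 4"
    unfolding euler_def rhs_def k1 k2 c by (cases "dx = 0") (simp_all add: field_simps)
  show "?e 1 / ?e 0 = uh \<and> (?e 2 - (?e 1)\<^sup>2 / (2 * ?e 0) - ?e 4) / ?e 3 = ph"
    using nz unfolding e2 unfolding e1 by (simp add: field_simps power2_eq_square)
qed

end

theorem theorem1:
  fixes sl :: limiter and dx :: real and N :: nat and D :: cdata
  assumes lim: "\<And>w c j. (\<forall>i. w i = c) \<Longrightarrow> sl w j = 0"
    and dx: "dx > 0"
    and wd: "well_defined sl dx D N"
  shows "((\<exists>Gh Ph. (\<forall>j. ga D j = Gh) \<and> (\<forall>j. pq D j = Ph)) \<longrightarrow>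
            (\<forall>j\<in>{1..N}. rhs sl dx D j 3 = 0 \<and> rhs sl dx D j 4 = 0))
       \<and> (\<forall>uh ph dt. (\<forall>j. vel D j = uh) \<and> (\<forall>j. pres D j = ph) \<longrightarrow>
            (\<forall>j\<in>{1..N}. euler sl dx D dt j 0 \<noteq> 0 \<and> euler sl dx D dt j 3 \<noteq> 0 \<longrightarrow>
               euler sl dx D dt j 1 / euler sl dx D dt j 0 = uh
             \<and> (euler sl dx D dt j 2 - (euler sl dx D dt j 1)\<^sup>2 / (2 * euler sl dx D dt j 0)
                  - euler sl dx D dt j 4) / euler sl dx D dt j 3 = ph))"
proof (intro conjI allI impI)
  assume "\<exists>Gh Ph. (\<forall>j. ga D j = Gh) \<and> (\<forall>j. pq D j = Ph)"
  then obtain Gh Ph where G: "\<forall>j. ga D j = Gh" and P: "\<forall>j. pq D j = Ph" by blast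
  show "\<forall>j\<in>{1..N}. rhs sl dx D j 3 = 0 \<and> rhs sl dx D j 4 = 0"
    by (rule part1[where sl=sl and dx=dx and N=N and D=D and Gh=Gh and Ph=Ph]) (rule lim, assumption | rule wd G P)+
next
  fix uh ph dt
  assume VP: "(\<forall>j. vel D j = uh) \<and> (\<forall>j. pres D j = ph)"
  show "\<forall>j\<in>{1..N}. euler sl dx D dt j 0 \<noteq> 0 \<and> euler sl dx D dt j 3 \<noteq> 0 \<longrightarrow>
               euler sl dx D dt j 1 / euler sl dx D dt j 0 = uh
             \<and> (euler sl dx D dt j 2 - (euler sl dx D dt j 1)\<^sup>2 / (2 * euler sl dx D dt j 0)
                  - euler sl dx D dt j 4) / euler sl dx D dt j 3 = ph"
    by (rule part2[where sl=sl and dx=dx and N=N and D=D and uh=uh and ph=ph and dt=dt]) (rule lim, assumption | rule wd | use VP in blast)+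
qed

end
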